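(* Let $X$ be a finitely supported subset of an invariant set $Z$. (1) If $X$ is FSM Dedekind infinite, then $X$ is FSM Mostowski infinite. (2) If $X$ is FSM Mostowski infinite, then $X$ is FSM Tarski II infinite. The converse of (2) fails: $\wp_{fin}(A)$ is FSM Tarski II infinite but not FSM Mostowski infinite.
   Context: Framework (FSM). Work in ZF with a fixed infinite set $A$ of atoms; $S_A$ is the group of bijections of $A$ fixing all but finitely many atoms; $Fix(S)$ is the set of $\pi\in S_A$ fixing each element of $S\subseteq A$; $S$ supports $x$ if $\pi\cdot x=x$ for all $\pi\in Fix(S)$. An invariant set is an $S_A$-set all of whose elements have finite supports; subsets carry $\pi\star W=\{\pi\cdot w:w\in W\}$; relations on $Z$ are subsets of $Z\times Z$ with the componentwise action. $\wp_{fin}(A)$ is the set of finite subsets of $A$. A function is finitely supported if there is a finite $S$ such that for $\pi\in Fix(S)$, $\pi$ preserves domain and codomain and $f(\pi\cdot x)=\pi\cdot f(x)$. Definitions: $X$ is FSM Dedekind infinite if there is a finitely supported injection from $X$ onto a finitely supported proper subset of $X$. $X$ is FSM Mostowski infinite if there exist an infinite finitely supported subset $Y\subseteq X$ and a total order on $Y$ that is finitely supported as a subset of $Z\times Z$. $X$ is FSM Tarski II infinite if there is a nonempty finitely supported family of finitely supported subsets of $X$ that is totally ordered by inclusion and has no maximal element. *)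

theory Defs
  imports Main
begin

(* Atoms are the elements of a type 'a, assumed infinite in the theorem.
   S_A: bijections of the atoms fixing all but finitely many atoms. *)
definition perms :: "('a \<Rightarrow> 'a) set" where
  "perms = {p. bij p \<and> finite {a. p a \<noteq> a}}"

definition Fix :: "'a set \<Rightarrow> ('a \<Rightarrow> 'a) set" where
  "Fix S = {p \<in> perms. \<forall>a\<in>S. p a = a}"

definition supports :: "(('a \<Rightarrow> 'a) \<Rightarrow> 'z \<Rightarrow> 'z) \<Rightarrow> 'a set \<Rightarrow> 'z \<Rightarrow> bool" where
  "supports act S x \<longleftrightarrow> (\<forall>p\<in>Fix S. act p x = x)"

definition invariant_set :: "(('a \<Rightarrow> 'a) \<Rightarrow> 'z \<Rightarrow> 'z) \<Rightarrow> 'z set \<Rightarrow> bool" where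
  "invariant_set act Z \<longleftrightarrow>
     (\<forall>p\<in>perms. \<forall>z\<in>Z. act p z \<in> Z) \<and>
     (\<forall>z\<in>Z. act id z = z) \<and>
     (\<forall>p\<in>perms. \<forall>q\<in>perms. \<forall>z\<in>Z. act (p \<circ> q) z = act p (act q z)) \<and>
     (\<forall>z\<in>Z. \<exists>S. finite S \<and> supports act S z)"

definition fs_set :: "(('a \<Rightarrow> 'a) \<Rightarrow> 'z \<Rightarrow> 'z) \<Rightarrow> 'z set \<Rightarrow> bool" where
  "fs_set act X \<longleftrightarrow> (\<exists>S. finite S \<and> (\<forall>p\<in>Fix S. act p ` X = X))"

definition fs_rel :: "(('a \<Rightarrow> 'a) \<Rightarrow> 'z \<Rightarrow> 'z) \<Rightarrow> ('z \<times> 'z) set \<Rightarrow> bool" where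
  "fs_rel act R \<longleftrightarrow>
     (\<exists>S. finite S \<and> (\<forall>p\<in>Fix S. (\<lambda>(x, y). (act p x, act p y)) ` R = R))"

definition fs_family :: "(('a \<Rightarrow> 'a) \<Rightarrow> 'z \<Rightarrow> 'z) \<Rightarrow> 'z set set \<Rightarrow> bool" where
  "fs_family act F \<longleftrightarrow> (\<exists>S. finite S \<and> (\<forall>p\<in>Fix S. (\<lambda>W. act p ` W) ` F = F))"

definition fs_fun :: "(('a \<Rightarrow> 'a) \<Rightarrow> 'z \<Rightarrow> 'z) \<Rightarrow> 'z set \<Rightarrow> 'z set \<Rightarrow> ('z \<Rightarrow> 'z) \<Rightarrow> bool" where
  "fs_fun act X Y f \<longleftrightarrow>
     (\<exists>S. finite S \<and> (\<forall>p\<in>Fix S. act p ` X = X \<and> act p ` Y = Y \<and>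
                          (\<forall>x\<in>X. f (act p x) = act p (f x))))"

definition FSM_Dedekind_infinite :: "(('a \<Rightarrow> 'a) \<Rightarrow> 'z \<Rightarrow> 'z) \<Rightarrow> 'z set \<Rightarrow> bool" where
  "FSM_Dedekind_infinite act X \<longleftrightarrow>
     (\<exists>f Y. fs_set act Y \<and> Y \<subset> X \<and> bij_betw f X Y \<and> fs_fun act X Y f)"

definition FSM_Mostowski_infinite :: "(('a \<Rightarrow> 'a) \<Rightarrow> 'z \<Rightarrow> 'z) \<Rightarrow> 'z set \<Rightarrow> bool" where
  "FSM_Mostowski_infinite act X \<longleftrightarrow>
     (\<exists>Y R. Y \<subseteq> X \<and> infinite Y \<and> fs_set act Y \<and> linear_order_on Y R \<and> fs_rel act R)"

definition FSM_TarskiII_infinite :: "(('a \<Rightarrow> 'a) \<Rightarrow> 'z \<Rightarrow> 'z) \<Rightarrow> 'z set \<Rightarrow> bool" where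
  "FSM_TarskiII_infinite act X \<longleftrightarrow>
     (\<exists>F. F \<noteq> {} \<and> fs_family act F \<and> (\<forall>W\<in>F. W \<subseteq> X \<and> fs_set act W) \<and>
          (\<forall>U\<in>F. \<forall>W\<in>F. U \<subseteq> W \<or> W \<subseteq> U) \<and>
          \<not> (\<exists>M\<in>F. \<forall>W\<in>F. M \<subseteq> W \<longrightarrow> W = M))"

end

theory Submission
  imports Defs "HOL-Combinatorics.Cycles"
begin

lemma perms_iff: "p \<in> perms \<longleftrightarrow> permutation p"
  by (simp add: perms_def permutation)

lemma Fix_Un: "p \<in> Fix (S \<union> T) \<Longrightarrow> p \<in> Fix S \<and> p \<in> Fix T"
  by (auto simp: Fix_def)

lemma iter_mono_rel:
  assumes "\<And>x y. (x,y)\<in>R \<Longrightarrow> (g x, g y) \<in> R" "(x,y) \<in> R"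
  shows "((g^^k) x, (g^^k) y) \<in> R"
  using assms by (induction k) auto

lemma iter_fix_core:
  assumes tr: "trans R" and an: "antisym R"
    and mono: "\<And>x y. (x,y)\<in>R \<Longrightarrow> (g x, g y) \<in> R"
    and per: "(g^^n) y = y" and n: "n > 0" and st: "(y, g y) \<in> R"
  shows "g y = y"
proof -
  have ch: "(y, (g^^Suc k) y) \<in> R" for k
  proof (induction k)
    case 0
    then show ?case using st by simp
  next
    case (Suc k)
    have "((g^^Suc k) y, (g^^Suc k) (g y)) \<in> R" by (rule iter_mono_rel[OF mono st])
    moreover have "(g^^Suc k) (g y) = (g^^Suc (Suc k)) y"
      by (metis comp_apply funpow_Suc_right)
    ultimately show ?case using Suc tr by (metis transD)
  qed
  have "(g y, g ((g^^Suc (2*n - 2)) y)) \<in> R" using mono[OF ch] .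
  moreover have "g ((g^^Suc (2*n - 2)) y) = (g^^(n + n)) y"
  proof -
    have "Suc (Suc (2*n - 2)) = n + n" using n by simp
    then show ?thesis by (metis comp_apply funpow.simps(2))
  qed
  moreover have "(g^^(n + n)) y = y" using per by (simp add: funpow_add)
  ultimately have "(g y, y) \<in> R" by simp
  with st an show ?thesis by (metis antisymD)
qed

lemma fixed_elem:
  assumes lin: "linear_order_on Y R"
    and p: "p \<in> perms"
    and RR: "(\<lambda>(x,y). (act p x, act p y)) ` R = R"
    and idl: "\<forall>y\<in>Y. act id y = y"
    and cmp: "\<forall>q\<in>perms. \<forall>r\<in>perms. \<forall>y\<in>Y. act (q \<circ> r) y = act q (act r y)"
    and y: "y \<in> Y"
  shows "act p y = y"
proof -
  define g where "g = act p"
  have mono: "(g x, g z) \<in> R" if "(x,z) \<in> R" for x z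
  proof -
    have "(g x, g z) \<in> (\<lambda>(x,y). (act p x, act p y)) ` R"
      using that unfolding g_def by force
    then show ?thesis using RR by simp
  qed
  have RY: "R \<subseteq> Y \<times> Y" using lin
    by (auto simp: linear_order_on_def partial_order_on_def preorder_on_def refl_on_def)
  have refl: "(x,x) \<in> R" if "x \<in> Y" for x using lin that
    by (auto simp: linear_order_on_def partial_order_on_def preorder_on_def refl_on_def)
  have gY: "g x \<in> Y" if "x \<in> Y" for x
    using mono[OF refl[OF that]] RY by auto
  have pp: "permutation p" using p perms_iff by auto
  have iter: "act (p^^k) x = (g^^k) x \<and> (g^^k) x \<in> Y" if "x \<in> Y" for k x
  proof (induction k)
    case 0 then show ?case using idl that by (simp add: id_def)
  next
    case (Suc k)
    have pk: "p^^k \<in> perms" using permutation_funpow[OF pp] perms_iff by auto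
    have "act (p^^Suc k) x = act (p \<circ> p^^k) x" by simp
    also have "\<dots> = act p (act (p^^k) x)" using cmp p pk that by blast
    also have "\<dots> = (g^^Suc k) x" using Suc g_def by simp
    finally show ?case using Suc gY by (simp del: funpow.simps add: funpow_Suc_right[symmetric]) (metis comp_apply funpow.simps(2))
  qed
  obtain n where n: "p^^n = id" "n > 0" using permutation_is_nilpotent[OF pp] by blast
  have per: "(g^^n) y = y" using iter[OF y, of n] n idl y by simp
  have tr: "trans R" and an: "antisym R" and tot: "total_on Y R" using lin
    by (auto simp: linear_order_on_def partial_order_on_def preorder_on_def)
  have "g y = y"
  proof (cases "g y = y")
    case False
    then have "(y, g y) \<in> R \<or> (g y, y) \<in> R" using tot y gY[OF y]
      by (auto simp: total_on_def)
    then show ?thesis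
    proof
      assume "(y, g y) \<in> R"
      then show ?thesis using iter_fix_core[OF tr an mono per n(2)] by blast
    next
      assume "(g y, y) \<in> R"
      then have "(y, g y) \<in> R\<inverse>" by simp
      moreover have "\<And>x z. (x,z)\<in>R\<inverse> \<Longrightarrow> (g x, g z) \<in> R\<inverse>" using mono by simp
      moreover have "trans (R\<inverse>)" using tr by (auto simp: trans_def)
      moreover have "antisym (R\<inverse>)" using an by (auto simp: antisym_def)
      ultimately show ?thesis
        using iter_fix_core[of "R\<inverse>" g n y, OF _ _ _ per n(2)]
        by blast
    qed
  qed simp
  then show ?thesis by (simp add: g_def)
qed

lemma part1:
  assumes inv: "invariant_set act Z" and XZ: "X \<subseteq> Z"
    and D: "FSM_Dedekind_infinite act X"
  shows "FSM_Mostowski_infinite act X"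
proof -
  obtain f Y where Y: "Y \<subset> X" and bij: "bij_betw f X Y" and ff: "fs_fun act X Y f"
    using D unfolding FSM_Dedekind_infinite_def by blast
  obtain S where S: "finite S" "\<forall>p\<in>Fix S. act p ` X = X \<and> act p ` Y = Y \<and>
                          (\<forall>x\<in>X. f (act p x) = act p (f x))"
    using ff unfolding fs_fun_def by blast
  obtain x0 where x0: "x0 \<in> X" "x0 \<notin> Y" using Y by blast
  obtain T where T: "finite T" "supports act T x0" using inv x0 XZ unfolding invariant_set_def by blast
  define s where "s n = (f^^n) x0" for n
  have fXY: "f x \<in> Y" if "x \<in> X" for x using bij that by (auto simp: bij_betw_def)
  have sX: "s n \<in> X" for n
    by (induction n) (use x0 fXY Y in \<open>auto simp: s_def\<close>)
  have sfix: "act p (s n) = s n" if "p \<in> Fix (S \<union> T)" for p n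
  proof (induction n)
    case 0 then show ?case using T Fix_Un[OF that] by (simp add: s_def supports_def)
  next
    case (Suc n)
    have "act p (s (Suc n)) = act p (f (s n))" by (simp add: s_def)
    also have "\<dots> = f (act p (s n))" using S(2) Fix_Un[OF that] sX by metis
    finally show ?case using Suc by (simp add: s_def)
  qed
  have injf: "inj_on f X" using bij by (auto simp: bij_betw_def)
  have sne: "s (i + k) \<noteq> s i" if "k > 0" for i k
  proof (induction i)
    case 0
    have "s k = f (s (k - 1))" using that by (cases k) (auto simp: s_def)
    then show ?case using fXY[OF sX] x0 by (simp add: s_def) (metis funpow_0)
  next
    case (Suc i)
    have "s (Suc i + k) = f (s (i + k))" "s (Suc i) = f (s i)" by (simp_all add: s_def)
    then show ?case using Suc injf sX by (metis inj_on_eq_iff)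
  qed
  have inj: "inj s"
  proof (rule injI)
    fix i j assume e: "s i = s j"
    show "i = j"
    proof (rule ccontr)
      assume "i \<noteq> j"
      then have "i < j \<or> j < i" by arith
      then show False
      proof
        assume "i < j" then show False using sne[of "j - i" i] e by simp
      next
        assume "j < i" then show False using sne[of "i - j" j] e by simp
      qed
    qed
  qed
  define Y' where "Y' = range s"
  define R where "R = {(s i, s j) | i j. i \<le> j}"
  have "linear_order_on Y' R"
    unfolding linear_order_on_def partial_order_on_def preorder_on_def refl_on_def
      trans_def antisym_def total_on_def Y'_def R_def
    using inj by (auto simp: inj_eq)
  moreover have "infinite Y'" unfolding Y'_def using inj by (metis finite_imageD infinite_UNIV_nat)
  moreover have "Y' \<subseteq> X" using sX by (auto simp: Y'_def)
  moreover have "fs_set act Y'" unfolding fs_set_def Y'_def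
  proof (intro exI[of _ "S \<union> T"] conjI ballI)
    show "finite (S \<union> T)" using S T by simp
    fix p assume "p \<in> Fix (S \<union> T)"
    then show "act p ` range s = range s" using sfix by (simp add: image_image)
  qed
  moreover have "fs_rel act R" unfolding fs_rel_def
  proof (intro exI[of _ "S \<union> T"] conjI ballI)
    show "finite (S \<union> T)" using S T by simp
    fix p assume p: "p \<in> Fix (S \<union> T)"
    have "(\<lambda>(x, y). (act p x, act p y)) ` R = (\<lambda>(x, y). (x, y)) ` R"
      unfolding R_def using sfix[OF p] by (intro image_cong) auto
    then show "(\<lambda>(x, y). (act p x, act p y)) ` R = R" by simp
  qed
  ultimately show ?thesis unfolding FSM_Mostowski_infinite_def by blast
qed


lemma part2:
  assumes inv: "invariant_set act Z" and XZ: "X \<subseteq> Z"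
    and M: "FSM_Mostowski_infinite act X"
  shows "FSM_TarskiII_infinite act X"
proof -
  obtain Y R where Y: "Y \<subseteq> X" "infinite Y" and lin: "linear_order_on Y R" and fr: "fs_rel act R"
    using M unfolding FSM_Mostowski_infinite_def by blast
  obtain S where S: "finite S" "\<forall>p\<in>Fix S. (\<lambda>(x, y). (act p x, act p y)) ` R = R"
    using fr unfolding fs_rel_def by blast
  have fixe: "act p y = y" if "p \<in> Fix S" "y \<in> Y" for p y
  proof (rule fixed_elem[where act=act and p=p and y=y, OF lin])
    show "p \<in> perms" using that by (simp add: Fix_def)
    show "(\<lambda>(x, y). (act p x, act p y)) ` R = R" using S that by blast
    show "\<forall>y\<in>Y. act id y = y" using inv Y XZ unfolding invariant_set_def by blast
    show "\<forall>q\<in>perms. \<forall>r\<in>perms. \<forall>y\<in>Y. act (q \<circ> r) y = act q (act r y)"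
      using inv Y XZ unfolding invariant_set_def by blast
    show "y \<in> Y" by fact
  qed
  obtain s :: "nat \<Rightarrow> _" where s: "inj s" "range s \<subseteq> Y"
    using infinite_countable_subset[OF Y(2)] by blast
  define F where "F = (\<lambda>n. s ` {..<n}) ` UNIV"
  have fixW: "act p ` W = W" if "p \<in> Fix S" "W \<subseteq> Y" for p W
  proof -
    have "act p ` W = id ` W" using fixe[OF that(1)] that(2) by (intro image_cong) auto
    then show ?thesis by simp
  qed
  have WY: "W \<subseteq> Y" if "W \<in> F" for W using that s(2) by (auto simp: F_def)
  have "F \<noteq> {}" by (simp add: F_def)
  moreover have "fs_family act F" unfolding fs_family_def
  proof (intro exI[of _ S] conjI ballI)
    show "finite S" by fact
    fix p assume p: "p \<in> Fix S"
    have "(\<lambda>W. act p ` W) ` F = id ` F" using fixW[OF p] WY by (intro image_cong) auto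
    then show "(\<lambda>W. act p ` W) ` F = F" by simp
  qed
  moreover have "\<forall>W\<in>F. W \<subseteq> X \<and> fs_set act W"
  proof
    fix W assume W: "W \<in> F"
    have "\<forall>p\<in>Fix S. act p ` W = W" using fixW WY[OF W] by blast
    then have "fs_set act W" unfolding fs_set_def using S(1) by blast
    then show "W \<subseteq> X \<and> fs_set act W" using WY[OF W] Y(1) by blast
  qed
  moreover have "\<forall>U\<in>F. \<forall>W\<in>F. U \<subseteq> W \<or> W \<subseteq> U"
  proof (intro ballI)
    fix U W assume "U \<in> F" "W \<in> F"
    then obtain m n where "U = s ` {..<m}" "W = s ` {..<n}" unfolding F_def by blast
    then show "U \<subseteq> W \<or> W \<subseteq> U"
      by (cases "m \<le> n") (auto intro!: image_mono)
  qed
  moreover have "\<not> (\<exists>M\<in>F. \<forall>W\<in>F. M \<subseteq> W \<longrightarrow> W = M)"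
  proof
    assume "\<exists>M\<in>F. \<forall>W\<in>F. M \<subseteq> W \<longrightarrow> W = M"
    then obtain n where "\<forall>W\<in>F. s ` {..<n} \<subseteq> W \<longrightarrow> W = s ` {..<n}"
      unfolding F_def by blast
    moreover have "s ` {..<Suc n} \<in> F" unfolding F_def by blast
    moreover have "s ` {..<n} \<subseteq> s ` {..<Suc n}" by (auto simp: lessThan_Suc)
    ultimately have "s ` {..<Suc n} = s ` {..<n}" by blast
    moreover have "s n \<notin> s ` {..<n}" using s(1) by (auto simp: inj_eq)
    ultimately show False by (auto simp: lessThan_Suc)
  qed
  ultimately show ?thesis unfolding FSM_TarskiII_infinite_def by blast
qed


lemma level_fixed:
  fixes p :: "'a \<Rightarrow> 'a"
  assumes "p \<in> perms"
  shows "(\<lambda>V. p ` V) ` {W. finite W \<and> card W \<le> n} = {W. finite W \<and> card W \<le> n}"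
proof -
  have b: "bij p" using assms by (simp add: perms_def)
  then have ip: "inj p" by (simp add: bij_is_inj)
  show ?thesis
  proof (intro equalityI subsetI)
    fix V assume "V \<in> (\<lambda>V. p ` V) ` {W. finite W \<and> card W \<le> n}"
    then obtain W where "V = p ` W" "finite W" "card W \<le> n" by blast
    then show "V \<in> {W. finite W \<and> card W \<le> n}"
      using ip by (simp add: card_image inj_on_subset[OF ip])
  next
    fix V :: "'a set" assume V: "V \<in> {W. finite W \<and> card W \<le> n}"
    have "V = p ` (inv p ` V)" using b by (simp add: image_image bij_is_surj surj_f_inv_f)
    moreover have "finite (inv p ` V)" using V by simp
    moreover have "card (inv p ` V) \<le> n"
      using V card_image_le[of V "inv p"] by simp
    ultimately show "V \<in> (\<lambda>V. p ` V) ` {W. finite W \<and> card W \<le> n}" by blast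
  qed
qed

lemma part3:
  assumes inf: "infinite (UNIV :: 'a set)"
  shows "FSM_TarskiII_infinite (\<lambda>p W. p ` W) {W :: 'a set. finite W}"
proof -
  define L where "L n = {W :: 'a set. finite W \<and> card W \<le> n}" for n
  define F where "F = range L"
  have Lfix: "(\<lambda>V. p ` V) ` L n = L n" if "p \<in> Fix {}" for p n
    using level_fixed[of p n] that by (simp add: Fix_def L_def)
  have "F \<noteq> {}" by (simp add: F_def)
  moreover have "fs_family (\<lambda>p W. p ` W) F" unfolding fs_family_def
  proof (intro exI[of _ "{}"] conjI ballI)
    fix p :: "'a \<Rightarrow> 'a" assume p: "p \<in> Fix {}"
    show "(\<lambda>W. (\<lambda>V. p ` V) ` W) ` F = F" unfolding F_def using Lfix[OF p]
      by (simp add: image_image)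
  qed simp
  moreover have "\<forall>W\<in>F. W \<subseteq> {W. finite W} \<and> fs_set (\<lambda>p W. p ` W) W"
  proof
    fix W assume "W \<in> F"
    then obtain n where n: "W = L n" by (auto simp: F_def)
    have "fs_set (\<lambda>p W. p ` W) W" unfolding fs_set_def n using Lfix by blast
    then show "W \<subseteq> {W. finite W} \<and> fs_set (\<lambda>p W. p ` W) W" by (auto simp: n L_def)
  qed
  moreover have "\<forall>U\<in>F. \<forall>W\<in>F. U \<subseteq> W \<or> W \<subseteq> U"
  proof (intro ballI)
    fix U W assume "U \<in> F" "W \<in> F"
    then obtain m n where "U = L m" "W = L n" unfolding F_def by blast
    then show "U \<subseteq> W \<or> W \<subseteq> U" by (cases "m \<le> n") (auto simp: L_def)
  qed
  moreover have "\<not> (\<exists>M\<in>F. \<forall>W\<in>F. M \<subseteq> W \<longrightarrow> W = M)"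
  proof
    assume "\<exists>M\<in>F. \<forall>W\<in>F. M \<subseteq> W \<longrightarrow> W = M"
    then obtain n where h: "\<forall>W\<in>F. L n \<subseteq> W \<longrightarrow> W = L n" unfolding F_def by blast
    have "L (Suc n) \<in> F" unfolding F_def by blast
    moreover have "L n \<subseteq> L (Suc n)" by (auto simp: L_def)
    ultimately have e: "L (Suc n) = L n" using h by blast
    obtain B :: "'a set" where B: "finite B" "card B = Suc n"
      using infinite_arbitrarily_large[OF inf] by blast
    have "B \<in> L (Suc n)" using B by (simp add: L_def)
    then have "B \<in> L n" using e by simp
    then show False using B by (simp add: L_def)
  qed
  ultimately show ?thesis unfolding FSM_TarskiII_infinite_def by blast
qed

lemma part4:
  assumes inf: "infinite (UNIV :: 'a set)"
  shows "\<not> FSM_Mostowski_infinite (\<lambda>p W. p ` W) {W :: 'a set. finite W}"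
proof
  assume "FSM_Mostowski_infinite (\<lambda>p W. p ` W) {W :: 'a set. finite W}"
  then obtain Y R where Y: "Y \<subseteq> {W :: 'a set. finite W}" "infinite Y"
    and lin: "linear_order_on Y R" and fr: "fs_rel (\<lambda>p W. p ` W) R"
    unfolding FSM_Mostowski_infinite_def by blast
  obtain S where S: "finite S" "\<forall>p\<in>Fix S. (\<lambda>(x, y). (p ` x, p ` y)) ` R = R"
    using fr unfolding fs_rel_def by blast
  have fixe: "p ` W = W" if "p \<in> Fix S" "W \<in> Y" for p W
  proof (rule fixed_elem[where act="\<lambda>p W. p ` W" and p=p and y=W, OF lin])
    show "p \<in> perms" using that by (simp add: Fix_def)
    show "(\<lambda>(x, y). (p ` x, p ` y)) ` R = R" using S that by blast
    show "\<forall>y\<in>Y. id ` y = y" by simp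
    show "\<forall>q\<in>perms. \<forall>r\<in>perms. \<forall>y\<in>Y. (q \<circ> r) ` y = q ` (r ` y)"
      by (simp add: image_comp)
    show "W \<in> Y" by fact
  qed
  have "Y \<subseteq> Pow S"
  proof
    fix W assume W: "W \<in> Y"
    show "W \<in> Pow S"
    proof (rule ccontr)
      assume "W \<notin> Pow S"
      then obtain a where a: "a \<in> W" "a \<notin> S" by blast
      have "finite (S \<union> W)" using S(1) W Y(1) by auto
      then obtain b where b: "b \<notin> S \<union> W" using ex_new_if_finite[OF inf] by blast
      define p where "p = Transposition.transpose a b"
      have "p \<in> Fix S" unfolding Fix_def perms_iff p_def
        using a b permutation_swap_id by (auto simp: transpose_def)
      then have "p ` W = W" using fixe W by blast
      moreover have "p a = b" by (simp add: p_def)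
      ultimately show False using a b by blast
    qed
  qed
  then show False using Y(2) S(1) by (meson finite_Pow_iff finite_subset)
qed

theorem mainTheorem15:
  fixes act :: "('a \<Rightarrow> 'a) \<Rightarrow> 'z \<Rightarrow> 'z" and Z X :: "'z set"
  assumes "infinite (UNIV :: 'a set)"
    and "invariant_set act Z" and "X \<subseteq> Z" and "fs_set act X"
  shows "(FSM_Dedekind_infinite act X \<longrightarrow> FSM_Mostowski_infinite act X) \<and>
         (FSM_Mostowski_infinite act X \<longrightarrow> FSM_TarskiII_infinite act X) \<and>
         FSM_TarskiII_infinite (\<lambda>p W. p ` W) {W :: 'a set. finite W} \<and>
         \<not> FSM_Mostowski_infinite (\<lambda>p W. p ` W) {W :: 'a set. finite W}"
  using part1[OF assms(2,3)] part2[OF assms(2,3)] part3[OF assms(1)] part4[OF assms(1)]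
  by blast

end
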